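(* Let $X$ be a set, $B=(B,+,0)$ a unitary magma and $(A,k,q,s,p)$ a retraction point from $X$ to $B$. Define $\varphi\colon X\times B\times X\times B\to X$ by $$\varphi(x,b,x',b')=q\big((k(x)+s(b))+(k(x')+s(b'))\big).$$ Then $(X,\varphi)$ is a $B$-action.
   Context: A unitary magma is a set with a binary operation $+$ and an element $0$ with $b+0=b=0+b$ for all $b$; morphisms preserve $+$ and $0$. Given a set $X$ and a unitary magma $B$, a retraction point from $X$ to $B$ is a tuple $(A,k,q,s,p)$ where $A=(A,+,0)$ is a unitary magma, $k\colon X\to A$ and $q\colon A\to X$ are maps, $s\colon B\to A$ and $p\colon A\to B$ are morphisms of unitary magmas, and $p(s(b))=b$, $q(k(x))=x$, $p(k(x))=0$, $q(s(b))=q(0)$, and $k(q(a))+s(p(a))=a$ for all $x\in X$, $b\in B$, $a\in A$. A $B$-action is a pair $(X,\varphi)$ with $X$ a set and $\varphi\colon X\times B\times X\times B\to X$ a map such that: (1) there is an element $0\in X$ with $\varphi(x,0,0,0)=x=\varphi(0,0,x,0)$ for all $x\in X$; (2) $\varphi(x,b,0,0)=\varphi(x,0,0,b)=\varphi(0,0,x,b)$ for all $x\in X,b\in B$; (3) $\varphi(0,b,0,b')=0$ for all $b,b'\in B$; (4) writing $\varphi_{00}(x,b)=\varphi(x,0,0,b)$, for all $x,x'\in X$, $b,b'\in B$: $\varphi(x,b,x',b')=\varphi_{00}\big(\varphi(\varphi_{00}(x,b),b,\varphi_{00}(x',b'),b'),\,b+b'\big)$. *)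

theory Defs
  imports Main
begin

text \<open>Sets are modelled as types: the set X is the type 'x, a unitary magma
  (B,+,0) is a type 'b with an operation and a distinguished element.\<close>

definition unitary_magma :: "('b \<Rightarrow> 'b \<Rightarrow> 'b) \<Rightarrow> 'b \<Rightarrow> bool" where
  "unitary_magma add z \<longleftrightarrow> (\<forall>b. add b z = b \<and> add z b = b)"

definition magma_hom ::
  "('a \<Rightarrow> 'a \<Rightarrow> 'a) \<Rightarrow> 'a \<Rightarrow> ('b \<Rightarrow> 'b \<Rightarrow> 'b) \<Rightarrow> 'b \<Rightarrow> ('a \<Rightarrow> 'b) \<Rightarrow> bool" where
  "magma_hom addA zA addB zB f \<longleftrightarrow>
     (\<forall>x y. f (addA x y) = addB (f x) (f y)) \<and> f zA = zB"

definition retraction_point ::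
  "('b \<Rightarrow> 'b \<Rightarrow> 'b) \<Rightarrow> 'b \<Rightarrow> ('a \<Rightarrow> 'a \<Rightarrow> 'a) \<Rightarrow> 'a \<Rightarrow>
   ('x \<Rightarrow> 'a) \<Rightarrow> ('a \<Rightarrow> 'x) \<Rightarrow> ('b \<Rightarrow> 'a) \<Rightarrow> ('a \<Rightarrow> 'b) \<Rightarrow> bool" where
  "retraction_point addB zB addA zA k q s p \<longleftrightarrow>
     unitary_magma addA zA \<and>
     magma_hom addB zB addA zA s \<and> magma_hom addA zA addB zB p \<and>
     (\<forall>b. p (s b) = b) \<and> (\<forall>x. q (k x) = x) \<and> (\<forall>x. p (k x) = zB) \<and>
     (\<forall>b. q (s b) = q zA) \<and> (\<forall>a. addA (k (q a)) (s (p a)) = a)"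

definition B_action ::
  "('b \<Rightarrow> 'b \<Rightarrow> 'b) \<Rightarrow> 'b \<Rightarrow> ('x \<Rightarrow> 'b \<Rightarrow> 'x \<Rightarrow> 'b \<Rightarrow> 'x) \<Rightarrow> bool" where
  "B_action addB zB \<phi> \<longleftrightarrow>
     (\<exists>z::'x.
        (\<forall>x. \<phi> x zB z zB = x \<and> \<phi> z zB x zB = x) \<and>
        (\<forall>x b. \<phi> x b z zB = \<phi> x zB z b \<and> \<phi> x zB z b = \<phi> z zB x b) \<and>
        (\<forall>b b'. \<phi> z b z b' = z) \<and>
        (\<forall>x x' b b'. \<phi> x b x' b' =
            \<phi> (\<phi> (\<phi> x zB z b) b (\<phi> x' zB z b') b') zB z (addB b b')))"

end

theory Submission
  imports Defs
begin

theorem proposition5p1: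
  fixes addB :: "'b \<Rightarrow> 'b \<Rightarrow> 'b" and zB :: 'b
    and addA :: "'a \<Rightarrow> 'a \<Rightarrow> 'a" and zA :: 'a
    and k :: "'x \<Rightarrow> 'a" and q :: "'a \<Rightarrow> 'x" and s :: "'b \<Rightarrow> 'a" and p :: "'a \<Rightarrow> 'b"
  assumes "unitary_magma addB zB"
    and "retraction_point addB zB addA zA k q s p"
  shows "B_action addB zB
           (\<lambda>x b x' b'. q (addA (addA (k x) (s b)) (addA (k x') (s b'))))"
proof -
  have uA: "\<And>a. addA a zA = a" "\<And>a. addA zA a = a"
    using assms(2) unfolding retraction_point_def unitary_magma_def by auto
  have uB: "\<And>a. addB a zB = a" "\<And>a. addB zB a = a"
    using assms(1) unfolding unitary_magma_def by auto
  have sh: "\<And>x y. s (addB x y) = addA (s x) (s y)" "s zB = zA"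
    using assms(2) unfolding retraction_point_def magma_hom_def by auto
  have ph: "\<And>x y. p (addA x y) = addB (p x) (p y)" "p zA = zB"
    using assms(2) unfolding retraction_point_def magma_hom_def by auto
  have ps: "\<And>b. p (s b) = b" and qk: "\<And>x. q (k x) = x" and pk: "\<And>x. p (k x) = zB"
    and qs: "\<And>b. q (s b) = q zA" and dec: "\<And>a. addA (k (q a)) (s (p a)) = a"
    using assms(2) unfolding retraction_point_def by auto
  have kz: "k (q zA) = zA"
    using dec[of zA] ph(2) sh(2) uA(1) by simp
  have key: "\<And>x b. addA (k (q (addA (k x) (s b)))) (s b) = addA (k x) (s b)"
  proof -
    fix x b
    have "p (addA (k x) (s b)) = b" using ph(1) pk ps uB by simp
    then show "addA (k (q (addA (k x) (s b)))) (s b) = addA (k x) (s b)"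
      using dec[of "addA (k x) (s b)"] by simp
  qed
  have key2: "\<And>x b x' b'. addA (k (q (addA (addA (k x) (s b)) (addA (k x') (s b'))))) (s (addB b b'))
      = addA (addA (k x) (s b)) (addA (k x') (s b'))"
  proof -
    fix x b x' b'
    have "p (addA (addA (k x) (s b)) (addA (k x') (s b'))) = addB b b'" using ph(1) pk ps uB by simp
    then show "?thesis x b x' b'"
      using dec[of "addA (addA (k x) (s b)) (addA (k x') (s b'))"] by simp
  qed
  show ?thesis unfolding B_action_def
    apply (rule exI[of _ "q zA"])
    apply (simp add: kz uA sh(2) qk key key2 qs sh(1)[symmetric])
    done
qed

end
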